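(* Let $G,H$ be non-discrete unimodular lcsc compactly generated groups, $(\Omega,X_G,X_H,\mu)$ a measure equivalence coupling with cocycle $\alpha\colon G\times X_H\to H$, and $p\ge1$. Assume $$C_p:=\int_{S_G}\int_{X_H}|\alpha(s^{-1},x)|_H^p\,d\nu_H(x)\,d\lambda_G(s)<\infty.$$ Then for every $f\in\mathrm{L}^p(H)$ with support of finite measure, $$\int_{X_G}\|\nabla^{\mathrm{int}}_Gf_x\|_p^p\,d\nu_G(x)\le C_p\|\nabla^{\sup}_Hf\|_p^p.$$
   Context: Measure equivalence coupling: measure space $(\Omega,\mu)$ with commuting measure-preserving $G$- and $H$-actions (written $\ast$), subsets $X_G,X_H$ with finite measures $\nu_G,\nu_H$ such that $(g,x)\mapsto g\ast x$ is a measure space isomorphism $(G\times X_G,\lambda_G\otimes\nu_G)\to(\Omega,\mu)$ and likewise for $H\times X_H$. $\alpha(g,x)\ast g\ast x$ is the unique point of $(H\ast g\ast x)\cap X_H$. $S_G,S_H$ are compact generating sets, $|\cdot|_H$ the word length, $\lambda(s)u(g)=u(s^{-1}g)$, $\|\nabla^{\mathrm{int}}_Gu\|_p^p=\int_{S_G}\|u-\lambda(s)u\|_p^p\,d\lambda_G(s)$, $\|\nabla^{\sup}_Hf\|_p=\sup_{s\in S_H}\|f-\lambda(s)f\|_p$. Given $f\colon H\to\mathbb{R}$: $\tilde f(h\ast x)=f(h^{-1})$ ($h\in H,x\in X_H$), $f_x(g)=\tilde f(g\ast x)$ ($x\in X_G,g\in G$). *)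

theory Defs
  imports "HOL-Analysis.Analysis"
begin

text \<open>Groups are written additively (class group_add, not necessarily commutative):
  the product g h is g + h, the inverse g^{-1} is - g, the identity is 0.\<close>

definition lcsc_group :: "'g::{topological_group_add, t2_space, second_countable_topology} itself \<Rightarrow> bool" where
  "lcsc_group _ \<longleftrightarrow> locally_compact_space (euclidean :: 'g topology)"

definition non_discrete_group :: "'g::{topological_group_add} itself \<Rightarrow> bool" where
  "non_discrete_group _ \<longleftrightarrow> \<not> open {0::'g}"

definition haar_measure :: "'g::topological_group_add measure \<Rightarrow> bool" where
  "haar_measure M \<longleftrightarrow> sets M = sets borel \<and>
     (\<forall>g. \<forall>A\<in>sets borel. emeasure M ((+) g ` A) = emeasure M A) \<and>
     (\<forall>K. compact K \<longrightarrow> emeasure M K < \<infinity>) \<and>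
     (\<forall>U. open U \<and> U \<noteq> {} \<longrightarrow> emeasure M U > 0)"

definition unimodular_haar :: "'g::topological_group_add measure \<Rightarrow> bool" where
  "unimodular_haar M \<longleftrightarrow> haar_measure M \<and>
     (\<forall>g. \<forall>A\<in>sets borel. emeasure M ((\<lambda>x. x + g) ` A) = emeasure M A)"

definition words :: "'g::group_add set \<Rightarrow> nat \<Rightarrow> 'g set" where
  "words S n = {sum_list ws | ws. length ws = n \<and> set ws \<subseteq> S \<union> uminus ` S}"

definition generates :: "'g::group_add set \<Rightarrow> bool" where
  "generates S \<longleftrightarrow> (\<forall>g. \<exists>n. g \<in> words S n)"

definition compact_generating_set :: "'g::{topological_group_add} set \<Rightarrow> bool" where
  "compact_generating_set S \<longleftrightarrow> compact S \<and> generates S"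

definition word_length :: "'g::group_add set \<Rightarrow> 'g \<Rightarrow> nat" where
  "word_length S g = (LEAST n. g \<in> words S n)"

definition ltrans :: "'g::group_add \<Rightarrow> ('g \<Rightarrow> real) \<Rightarrow> 'g \<Rightarrow> real" where
  "ltrans s u g = u (- s + g)"

definition measure_iso :: "'a measure \<Rightarrow> 'b measure \<Rightarrow> ('a \<Rightarrow> 'b) \<Rightarrow> bool" where
  "measure_iso A B F \<longleftrightarrow> bij_betw F (space A) (space B) \<and> F \<in> A \<rightarrow>\<^sub>M B \<and>
     the_inv_into (space A) F \<in> B \<rightarrow>\<^sub>M A \<and> distr A B F = B"

definition mp_action :: "'w measure \<Rightarrow> ('g::topological_group_add \<Rightarrow> 'w \<Rightarrow> 'w) \<Rightarrow> bool" where
  "mp_action \<mu> act \<longleftrightarrow>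
     (\<forall>\<omega>\<in>space \<mu>. act 0 \<omega> = \<omega>) \<and>
     (\<forall>g h. \<forall>\<omega>\<in>space \<mu>. act (g + h) \<omega> = act g (act h \<omega>)) \<and>
     (\<lambda>(g, \<omega>). act g \<omega>) \<in> (borel \<Otimes>\<^sub>M \<mu>) \<rightarrow>\<^sub>M \<mu> \<and>
     (\<forall>g. act g \<in> \<mu> \<rightarrow>\<^sub>M \<mu> \<and> distr \<mu> \<mu> (act g) = \<mu>)"

text \<open>Measure equivalence coupling (Omega, X_G, X_H, mu) with actions gact, hact and
  finite measures nuG, nuH on X_G, X_H.\<close>
definition me_coupling ::
  "'g::topological_group_add measure \<Rightarrow> 'h::topological_group_add measure \<Rightarrow> 'w measure \<Rightarrow>
   ('g \<Rightarrow> 'w \<Rightarrow> 'w) \<Rightarrow> ('h \<Rightarrow> 'w \<Rightarrow> 'w) \<Rightarrow> 'w measure \<Rightarrow> 'w measure \<Rightarrow> bool" where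
  "me_coupling lG lH \<mu> gact hact nuG nuH \<longleftrightarrow>
     mp_action \<mu> gact \<and> mp_action \<mu> hact \<and>
     (\<forall>g h. \<forall>\<omega>\<in>space \<mu>. gact g (hact h \<omega>) = hact h (gact g \<omega>)) \<and>
     space nuG \<subseteq> space \<mu> \<and> space nuH \<subseteq> space \<mu> \<and>
     finite_measure nuG \<and> finite_measure nuH \<and>
     measure_iso (lG \<Otimes>\<^sub>M nuG) \<mu> (\<lambda>(g, x). gact g x) \<and>
     measure_iso (lH \<Otimes>\<^sub>M nuH) \<mu> (\<lambda>(h, x). hact h x)"

definition cocycle :: "('g \<Rightarrow> 'w \<Rightarrow> 'w) \<Rightarrow> ('h \<Rightarrow> 'w \<Rightarrow> 'w) \<Rightarrow> 'w set \<Rightarrow> 'g \<Rightarrow> 'w \<Rightarrow> 'h" where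
  "cocycle gact hact XH g x = (THE h. hact h (gact g x) \<in> XH)"

definition ftilde :: "('h::group_add \<Rightarrow> 'w \<Rightarrow> 'w) \<Rightarrow> 'w set \<Rightarrow> ('h \<Rightarrow> real) \<Rightarrow> 'w \<Rightarrow> real" where
  "ftilde hact XH f \<omega> = f (- (THE h. \<exists>x\<in>XH. \<omega> = hact h x))"

definition fx :: "('g \<Rightarrow> 'w \<Rightarrow> 'w) \<Rightarrow> ('h::group_add \<Rightarrow> 'w \<Rightarrow> 'w) \<Rightarrow> 'w set \<Rightarrow> ('h \<Rightarrow> real) \<Rightarrow> 'w \<Rightarrow> 'g \<Rightarrow> real" where
  "fx gact hact XH f x g = ftilde hact XH f (gact g x)"

definition lp_pow :: "'a measure \<Rightarrow> real \<Rightarrow> ('a \<Rightarrow> real) \<Rightarrow> ennreal" where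
  "lp_pow M p u = (\<integral>\<^sup>+ g. ennreal (\<bar>u g\<bar> powr p) \<partial>M)"

text \<open>L^p norm (real-valued; meaningful for u in L^p).\<close>
definition lp_norm :: "'a measure \<Rightarrow> real \<Rightarrow> ('a \<Rightarrow> real) \<Rightarrow> real" where
  "lp_norm M p u = enn2real (lp_pow M p u) powr (1 / p)"

definition grad_int_pow :: "'g::group_add measure \<Rightarrow> 'g set \<Rightarrow> real \<Rightarrow> ('g \<Rightarrow> real) \<Rightarrow> ennreal" where
  "grad_int_pow lG S p u = (\<integral>\<^sup>+ s. indicator S s * lp_pow lG p (\<lambda>g. u g - ltrans s u g) \<partial>lG)"

definition grad_sup :: "'h::group_add measure \<Rightarrow> 'h set \<Rightarrow> real \<Rightarrow> ('h \<Rightarrow> real) \<Rightarrow> real" where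
  "grad_sup lH S p f = (SUP s\<in>S. lp_norm lH p (\<lambda>h. f h - ltrans s f h))"

end

theory Submission
  imports Defs
begin


lemma meas_uminus[measurable (raw)]:
  fixes g :: "'a \<Rightarrow> 'b::{second_countable_topology, topological_group_add}"
  assumes g: "g \<in> borel_measurable M"
  shows "(\<lambda>x. - g x) \<in> borel_measurable M"
  by (rule borel_measurable_continuous_on[OF continuous_on_minus[OF continuous_on_id] g])

lemma haar_sets: "haar_measure M \<Longrightarrow> sets M = sets borel"
  by (simp add: haar_measure_def)

lemma haar_space: "haar_measure M \<Longrightarrow> space M = UNIV"
proof -
  assume "haar_measure M"
  then have "sets M = sets borel" by (rule haar_sets)
  then have "space M = space borel" by (rule sets_eq_imp_space_eq)
  then show ?thesis by simp
qed

lemma haar_left_set: "haar_measure M \<Longrightarrow> A \<in> sets borel \<Longrightarrow> emeasure M ((+) g ` A) = emeasure M A"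
  by (simp add: haar_measure_def)

lemma unimod_haar: "unimodular_haar M \<Longrightarrow> haar_measure M"
  by (simp add: unimodular_haar_def)

lemma unimod_right_set: "unimodular_haar M \<Longrightarrow> A \<in> sets borel \<Longrightarrow> emeasure M ((\<lambda>x. x + g) ` A) = emeasure M A"
  by (simp add: unimodular_haar_def)

lemma haar_left_int:
  assumes H: "haar_measure M" and F: "F \<in> borel_measurable borel"
  shows "(\<integral>\<^sup>+h. F (g + h) \<partial>M) = (\<integral>\<^sup>+h. F h \<partial>M)"
proof -
  have S: "sets M = sets borel" using H by (rule haar_sets)
  have T: "(\<lambda>h. g + h) \<in> M \<rightarrow>\<^sub>M M"
    unfolding measurable_cong_sets[OF S S]
    by (intro borel_measurable_continuous_onI continuous_on_add continuous_on_const continuous_on_id)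
  have D: "distr M M (\<lambda>h. g + h) = M"
  proof (rule measure_eqI)
    show "sets (distr M M (\<lambda>h. g + h)) = sets M" by simp
    fix A assume A: "A \<in> sets (distr M M (\<lambda>h. g + h))"
    then have A': "A \<in> sets borel" using S by simp
    have "(\<lambda>h. g + h) -` A \<inter> space M = (+) (- g) ` A"
    proof (intro set_eqI iffI)
      fix x assume "x \<in> (\<lambda>h. g + h) -` A \<inter> space M"
      then have "g + x \<in> A" by simp
      moreover have "x = - g + (g + x)" by (simp add: add.assoc[symmetric])
      ultimately show "x \<in> (+) (- g) ` A" by (rule rev_image_eqI)
    next
      fix x assume "x \<in> (+) (- g) ` A"
      then obtain a where "a \<in> A" "x = - g + a" by (rule imageE)
      then show "x \<in> (\<lambda>h. g + h) -` A \<inter> space M"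
        using haar_space[OF H] by (simp add: add.assoc[symmetric])
    qed
    moreover have "emeasure M ((+) (- g) ` A) = emeasure M A" by (rule haar_left_set[OF H A'])
    ultimately show "emeasure (distr M M (\<lambda>h. g + h)) A = emeasure M A"
      using A T by (simp only: emeasure_distr sets_distr)
  qed
  have F': "F \<in> borel_measurable M" unfolding measurable_cong_sets[OF S refl] by (rule F)
  have "(\<integral>\<^sup>+h. F h \<partial>M) = (\<integral>\<^sup>+h. F h \<partial>distr M M (\<lambda>h. g + h))" using D by simp
  also have "\<dots> = (\<integral>\<^sup>+h. F (g + h) \<partial>M)"
    by (rule nn_integral_distr[OF T]) (unfold measurable_cong_sets[OF sets_distr refl], rule F')
  finally show ?thesis by simp
qed

lemma haar_right_int:
  assumes U: "unimodular_haar M" and F: "F \<in> borel_measurable borel"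
  shows "(\<integral>\<^sup>+h. F (h + g) \<partial>M) = (\<integral>\<^sup>+h. F h \<partial>M)"
proof -
  have H: "haar_measure M" using U by (rule unimod_haar)
  have S: "sets M = sets borel" using H by (rule haar_sets)
  have T: "(\<lambda>h. h + g) \<in> M \<rightarrow>\<^sub>M M"
    unfolding measurable_cong_sets[OF S S]
    by (intro borel_measurable_continuous_onI continuous_on_add continuous_on_const continuous_on_id)
  have D: "distr M M (\<lambda>h. h + g) = M"
  proof (rule measure_eqI)
    show "sets (distr M M (\<lambda>h. h + g)) = sets M" by simp
    fix A assume A: "A \<in> sets (distr M M (\<lambda>h. h + g))"
    then have A': "A \<in> sets borel" using S by simp
    have "(\<lambda>h. h + g) -` A \<inter> space M = (\<lambda>x. x + (- g)) ` A"
    proof (intro set_eqI iffI)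
      fix x assume "x \<in> (\<lambda>h. h + g) -` A \<inter> space M"
      then have "x + g \<in> A" by simp
      moreover have "x = (x + g) + (- g)" by (simp add: add.assoc)
      ultimately show "x \<in> (\<lambda>x. x + (- g)) ` A" by (rule rev_image_eqI)
    next
      fix x assume "x \<in> (\<lambda>x. x + (- g)) ` A"
      then obtain a where "a \<in> A" "x = a + (- g)" by (rule imageE)
      then show "x \<in> (\<lambda>h. h + g) -` A \<inter> space M"
        using haar_space[OF H] by (simp add: add.assoc)
    qed
    moreover have "emeasure M ((\<lambda>x. x + (- g)) ` A) = emeasure M A" by (rule unimod_right_set[OF U A'])
    ultimately show "emeasure (distr M M (\<lambda>h. h + g)) A = emeasure M A"
      using A T by (simp only: emeasure_distr sets_distr)
  qed
  have F': "F \<in> borel_measurable M" unfolding measurable_cong_sets[OF S refl] by (rule F)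
  have "(\<integral>\<^sup>+h. F h \<partial>M) = (\<integral>\<^sup>+h. F h \<partial>distr M M (\<lambda>h. h + g))" using D by simp
  also have "\<dots> = (\<integral>\<^sup>+h. F (h + g) \<partial>M)"
    by (rule nn_integral_distr[OF T]) (unfold measurable_cong_sets[OF sets_distr refl], rule F')
  finally show ?thesis by simp
qed



lemma nn_integral_cmult_any:
  assumes c: "c \<noteq> (\<infinity>::ennreal)"
  shows "(\<integral>\<^sup>+x. c * f x \<partial>M) = c * integral\<^sup>N M f"
proof (cases "c = 0")
  case True then show ?thesis by simp
next
  case False
  have img: "{g. simple_function M g \<and> g \<le> (\<lambda>x. c * f x)} = (\<lambda>g x. c * g x) ` {g. simple_function M g \<and> g \<le> f}"
  proof (intro set_eqI iffI)
    fix g assume "g \<in> {g. simple_function M g \<and> g \<le> (\<lambda>x. c * f x)}"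
    then have g: "simple_function M g" "g \<le> (\<lambda>x. c * f x)" by auto
    have e: "c * (a / c) = a" for a :: ennreal
      using False c by (simp add: ennreal_times_divide mult.commute[of c] mult_divide_eq_ennreal)
    have "g = (\<lambda>x. c * (g x / c))" by (simp add: e)
    moreover have "simple_function M (\<lambda>x. g x / c)" using g by (auto simp: divide_ennreal_def)
    moreover have "(\<lambda>x. g x / c) \<le> f"
    proof (rule le_funI)
      fix x have "g x / c \<le> (c * f x) / c" using g(2) by (intro divide_right_mono_ennreal) (auto simp: le_fun_def)
      also have "\<dots> = f x" using False c by (simp add: mult.commute[of c] mult_divide_eq_ennreal)
      finally show "g x / c \<le> f x" .
    qed
    ultimately show "g \<in> (\<lambda>g x. c * g x) ` {g. simple_function M g \<and> g \<le> f}"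
      by (intro image_eqI[where x="\<lambda>x. g x / c"]) auto
  next
    fix g assume "g \<in> (\<lambda>g x. c * g x) ` {g. simple_function M g \<and> g \<le> f}"
    then obtain g0 where "g = (\<lambda>x. c * g0 x)" "simple_function M g0" "g0 \<le> f" by auto
    then show "g \<in> {g. simple_function M g \<and> g \<le> (\<lambda>x. c * f x)}"
      by (auto simp: le_fun_def mult_left_mono)
  qed
  show ?thesis
    unfolding nn_integral_def img image_image SUP_mult_left_ennreal
    by (intro SUP_cong refl) simp
qed

lemma nn_integral_multc_any:
  assumes c: "c \<noteq> (\<infinity>::ennreal)"
  shows "(\<integral>\<^sup>+x. f x * c \<partial>M) = integral\<^sup>N M f * c"
  using nn_integral_cmult_any[OF c, where f=f and M=M] by (simp add: mult.commute)

lemma haar_sigma_finite: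
  fixes M :: "'g::{topological_group_add, t2_space, second_countable_topology} measure"
  assumes L: "lcsc_group TYPE('g)" and H: "haar_measure M"
  shows "sigma_finite_measure M"
proof -
  have "\<forall>x::'g. \<exists>U K. open U \<and> compact K \<and> x \<in> U \<and> U \<subseteq> K"
    using L unfolding lcsc_group_def locally_compact_space_def by simp
  then have "\<forall>x::'g. \<exists>p. open (fst p) \<and> compact (snd p) \<and> x \<in> fst p \<and> fst p \<subseteq> snd p"
  proof (intro allI)
    fix x :: 'g
    assume "\<forall>x::'g. \<exists>U K. open U \<and> compact K \<and> x \<in> U \<and> U \<subseteq> K"
    then obtain U K where "open U \<and> compact K \<and> x \<in> U \<and> U \<subseteq> K" by blast
    then show "\<exists>p. open (fst p) \<and> compact (snd p) \<and> x \<in> fst p \<and> fst p \<subseteq> snd p"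
      by (intro exI[of _ "(U, K)"]) simp
  qed
  then obtain P where P: "\<forall>x::'g. open (fst (P x)) \<and> compact (snd (P x)) \<and> x \<in> fst (P x) \<and> fst (P x) \<subseteq> snd (P x)"
    by (rule choice[THEN exE])
  define U where "U x = fst (P x)" for x
  define K where "K x = snd (P x)" for x
  have UK: "\<And>x. open (U x)" "\<And>x. compact (K x)" "\<And>x. x \<in> U x" "\<And>x. U x \<subseteq> K x"
    using P unfolding U_def K_def by auto
  obtain F where F: "F \<subseteq> range U" "countable F" "\<Union>F = \<Union>(range U)"
    using Lindelof[of "range U"] UK(1) by auto
  have S: "sets M = sets borel" by (rule haar_sets[OF H])
  have fin: "emeasure M (K x) < \<infinity>" for x using H UK(2) unfolding haar_measure_def by simp
  show ?thesis
  proof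
    show "\<exists>A. countable A \<and> A \<subseteq> sets M \<and> \<Union>A = space M \<and> (\<forall>a\<in>A. emeasure M a \<noteq> \<infinity>)"
    proof (intro exI conjI ballI)
      show "countable F" by fact
      show "F \<subseteq> sets M" using F(1) UK(1) S by auto
      show "\<Union>F = space M" using F(3) UK(3) haar_space[OF H] by auto
      fix a assume "a \<in> F"
      then obtain x where a: "a = U x" using F(1) by auto
      have "emeasure M (U x) \<le> emeasure M (K x)"
        using UK S by (intro emeasure_mono) (auto intro: borel_compact)
      then show "emeasure M a \<noteq> \<infinity>" using fin[of x] a by (auto simp: top_unique)
    qed
  qed
qed

lemma haar_pos_finite_set:
  fixes M :: "'g::{topological_group_add} measure"
  assumes H: "haar_measure M" and SF: "sigma_finite_measure M"
  obtains A where "A \<in> sets M" "0 < emeasure M A" "emeasure M A < \<infinity>"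
proof -
  interpret sigma_finite_measure M by fact
  obtain B :: "nat \<Rightarrow> 'g set" where B: "range B \<subseteq> sets M" "(\<Union>i. B i) = space M" "\<And>i. emeasure M (B i) \<noteq> \<infinity>"
    using sigma_finite by blast
  have pos: "emeasure M UNIV > 0" using H unfolding haar_measure_def by simp
  have "\<exists>i. emeasure M (B i) \<noteq> 0"
  proof (rule ccontr)
    assume "\<not> ?thesis"
    then have "emeasure M (\<Union>i. B i) = 0" using B(1) by (intro emeasure_UN_eq_0) auto
    then show False using pos B(2) haar_space[OF H] by simp
  qed
  then obtain i where "emeasure M (B i) \<noteq> 0" by blast
  then show ?thesis using B by (intro that[of "B i"]) (auto simp: less_top zero_less_iff_neq_zero)
qed

lemma bm_haar: "haar_measure M \<Longrightarrow> f \<in> borel_measurable borel \<Longrightarrow> f \<in> borel_measurable M"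
  by (unfold measurable_cong_sets[OF haar_sets refl])

lemma bm_haar2:
  fixes M :: "'g::{topological_group_add, second_countable_topology} measure"
  shows "haar_measure M \<Longrightarrow> f \<in> borel_measurable borel \<Longrightarrow> f \<in> borel_measurable (M \<Otimes>\<^sub>M M)"
proof -
  assume H: "haar_measure M" and f: "f \<in> borel_measurable borel"
  have "sets (M \<Otimes>\<^sub>M M) = sets (borel \<Otimes>\<^sub>M borel)"
    using haar_sets[OF H] by (intro sets_pair_measure_cong)
  also have "\<dots> = sets (borel :: ('g \<times> 'g) measure)" by (simp only: borel_prod)
  finally show ?thesis using f by (unfold measurable_cong_sets[OF _ refl])
qed

lemma cont_comp_meas:
  assumes "continuous_on UNIV \<phi>" "G \<in> borel_measurable borel"
  shows "(\<lambda>x. G (\<phi> x)) \<in> borel_measurable borel"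
  using measurable_compose[OF borel_measurable_continuous_onI[OF assms(1)] assms(2)] .



lemma haar_inv_int:
  fixes M :: "'g::{topological_group_add, t2_space, second_countable_topology} measure"
  assumes U: "unimodular_haar M" and SF: "sigma_finite_measure M" and F: "F \<in> borel_measurable borel"
  shows "(\<integral>\<^sup>+h. F (- h) \<partial>M) = (\<integral>\<^sup>+h. F h \<partial>M)"
proof -
  have H: "haar_measure M" using U by (rule unimod_haar)
  interpret P: pair_sigma_finite M M using SF by (simp add: pair_sigma_finite_def)
  obtain A where A: "A \<in> sets M" "0 < emeasure M A" "emeasure M A < \<infinity>"
    using haar_pos_finite_set[OF H SF] by blast
  define c where "c = emeasure M A"
  define w :: "'g \<Rightarrow> ennreal" where "w = indicator A"
  have Ab: "A \<in> sets borel" using A(1) haar_sets[OF H] by simp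
  have wm: "w \<in> borel_measurable borel" unfolding w_def using Ab by simp
  have cw: "(\<integral>\<^sup>+k. w k \<partial>M) = c" unfolding w_def c_def using A(1) by simp
  have cm: "continuous_on UNIV (\<lambda>h::'g. - h)" by (intro continuous_on_minus continuous_on_id)
  have Fm: "(\<lambda>h. F (- h)) \<in> borel_measurable borel" by (rule cont_comp_meas[OF cm F])
  have wsh: "(\<lambda>k. w (h + k)) \<in> borel_measurable borel" for h
    by (rule cont_comp_meas[OF _ wm]) (intro continuous_on_add continuous_on_const continuous_on_id)
  have Fsh: "(\<lambda>k. F (k + - h)) \<in> borel_measurable borel" for h
    by (rule cont_comp_meas[OF _ F]) (intro continuous_on_add continuous_on_const continuous_on_id)
  have j1: "(\<lambda>(h, k). F (- h) * w (h + k)) \<in> borel_measurable (M \<Otimes>\<^sub>M M)"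
  proof (rule bm_haar2[OF H])
    have a: "(\<lambda>p::'g\<times>'g. F (- fst p)) \<in> borel_measurable borel"
      by (rule cont_comp_meas[OF _ F]) (intro continuous_on_minus continuous_on_fst continuous_on_id)
    have b: "(\<lambda>p::'g\<times>'g. w (fst p + snd p)) \<in> borel_measurable borel"
      by (rule cont_comp_meas[OF _ wm]) (intro continuous_on_add continuous_on_fst continuous_on_snd continuous_on_id)
    have "(\<lambda>p::'g\<times>'g. F (- fst p) * w (fst p + snd p)) \<in> borel_measurable borel"
      using a b by (rule borel_measurable_times_ennreal)
    then show "(\<lambda>(h, k). F (- h) * w (h + k)) \<in> borel_measurable borel"
      by (simp add: case_prod_beta')
  qed
  have j2: "(\<lambda>(k, h). F (k + - h) * w h) \<in> borel_measurable (M \<Otimes>\<^sub>M M)"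
  proof (rule bm_haar2[OF H])
    have a: "(\<lambda>p::'g\<times>'g. F (fst p + - snd p)) \<in> borel_measurable borel"
      by (rule cont_comp_meas[OF _ F]) (intro continuous_on_add continuous_on_minus continuous_on_fst continuous_on_snd continuous_on_id)
    have b: "(\<lambda>p::'g\<times>'g. w (snd p)) \<in> borel_measurable borel"
      by (rule cont_comp_meas[OF _ wm]) (intro continuous_on_snd continuous_on_id)
    have "(\<lambda>p::'g\<times>'g. F (fst p + - snd p) * w (snd p)) \<in> borel_measurable borel"
      using a b by (rule borel_measurable_times_ennreal)
    then show "(\<lambda>(k, h). F (k + - h) * w h) \<in> borel_measurable borel"
      by (simp add: case_prod_beta')
  qed
  have "(\<integral>\<^sup>+h. F (- h) \<partial>M) * c = (\<integral>\<^sup>+h. F (- h) * c \<partial>M)"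
    by (rule nn_integral_multc[symmetric]) (rule bm_haar[OF H Fm])
  also have "\<dots> = (\<integral>\<^sup>+h. F (- h) * (\<integral>\<^sup>+k. w (h + k) \<partial>M) \<partial>M)"
    by (simp add: haar_left_int[OF H wm] cw)
  also have "\<dots> = (\<integral>\<^sup>+h. (\<integral>\<^sup>+k. F (- h) * w (h + k) \<partial>M) \<partial>M)"
    by (intro nn_integral_cong nn_integral_cmult[symmetric] bm_haar[OF H wsh])
  also have "\<dots> = (\<integral>\<^sup>+k. (\<integral>\<^sup>+h. F (- h) * w (h + k) \<partial>M) \<partial>M)"
    by (rule P.Fubini'[symmetric]) (use j1 in simp)
  also have "\<dots> = (\<integral>\<^sup>+k. (\<integral>\<^sup>+h. F (- (h + - k)) * w ((h + - k) + k) \<partial>M) \<partial>M)"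
  proof (rule nn_integral_cong)
    fix k :: 'g
    have "(\<lambda>h. w (h + k)) \<in> borel_measurable borel"
      by (rule cont_comp_meas[OF _ wm]) (intro continuous_on_add continuous_on_const continuous_on_id)
    with Fm have "(\<lambda>h. F (- h) * w (h + k)) \<in> borel_measurable borel"
      by (rule borel_measurable_times_ennreal)
    then show "(\<integral>\<^sup>+h. F (- h) * w (h + k) \<partial>M) = (\<integral>\<^sup>+h. F (- (h + - k)) * w ((h + - k) + k) \<partial>M)"
      using haar_right_int[OF U, of "\<lambda>h. F (- h) * w (h + k)" "- k"] by simp
  qed
  also have "\<dots> = (\<integral>\<^sup>+k. (\<integral>\<^sup>+h. F (k + - h) * w h \<partial>M) \<partial>M)"
    by (simp add: minus_add add.assoc)
  also have "\<dots> = (\<integral>\<^sup>+h. (\<integral>\<^sup>+k. F (k + - h) * w h \<partial>M) \<partial>M)"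
    by (rule P.Fubini') (use j2 in simp)
  also have "\<dots> = (\<integral>\<^sup>+h. (\<integral>\<^sup>+k. F (k + - h) \<partial>M) * w h \<partial>M)"
    by (intro nn_integral_cong nn_integral_multc bm_haar[OF H Fsh])
  also have "\<dots> = (\<integral>\<^sup>+h. (\<integral>\<^sup>+k. F k \<partial>M) * w h \<partial>M)"
    by (simp only: haar_right_int[OF U F])
  also have "\<dots> = (\<integral>\<^sup>+k. F k \<partial>M) * c"
    using cw by (simp add: nn_integral_cmult bm_haar[OF H wm])
  finally have eq: "(\<integral>\<^sup>+h. F (- h) \<partial>M) * c = (\<integral>\<^sup>+k. F k \<partial>M) * c" .
  have c0: "c \<noteq> 0" "c \<noteq> \<infinity>" using A unfolding c_def by auto
  have "(\<integral>\<^sup>+h. F (- h) \<partial>M) = (\<integral>\<^sup>+h. F (- h) \<partial>M) * c / c" using c0 by (simp add: mult_divide_eq_ennreal)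
  also have "\<dots> = (\<integral>\<^sup>+k. F k \<partial>M) * c / c" using eq by simp
  also have "\<dots> = (\<integral>\<^sup>+k. F k \<partial>M)" using c0 by (simp add: mult_divide_eq_ennreal)
  finally show ?thesis .
qed



lemma powr_two_convex:
  fixes a b u v p :: real
  assumes a: "a \<ge> 0" and b: "b \<ge> 0" and u: "u > 0" and v: "v > 0" and uv: "1/u + 1/v = 1" and p: "p \<ge> 1"
  shows "(a + b) powr p \<le> u powr (p - 1) * a powr p + v powr (p - 1) * b powr p"
proof -
  have iu: "1/u > 0" and iv: "1/v > 0" using u v by auto
  have u1: "u \<ge> 1"
  proof -
    have "1/u \<le> 1" using uv iv by linarith
    then show ?thesis using u by (simp add: divide_le_eq_1)
  qed
  have v1: "v \<ge> 1"
  proof -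
    have "1/v \<le> 1" using uv iu by linarith
    then show ?thesis using v by (simp add: divide_le_eq_1)
  qed
  have U1: "u powr (p - 1) \<ge> 1" using u1 p by (intro ge_one_powr_ge_zero) auto
  have V1: "v powr (p - 1) \<ge> 1" using v1 p by (intro ge_one_powr_ge_zero) auto
  have ap: "a powr p \<ge> 0" and bp: "b powr p \<ge> 0" by auto
  show ?thesis
  proof (cases "a = 0 \<or> b = 0")
    case True
    then show ?thesis
    proof
      assume a0: "a = 0"
      have "b powr p \<le> v powr (p - 1) * b powr p" using mult_right_mono[OF V1 bp] by simp
      then show ?thesis using a0 by simp
    next
      assume b0: "b = 0"
      have "a powr p \<le> u powr (p - 1) * a powr p" using mult_right_mono[OF U1 ap] by simp
      then show ?thesis using b0 by simp
    qed
  next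
    case False
    then have a0: "a > 0" and b0: "b > 0" using a b by auto
    have C: "convex_on {0<..} (\<lambda>x::real. x powr p)" by (rule powr_convex[OF p])
    have t0: "1/v \<ge> 0" "1/v \<le> 1" using iv iu uv by linarith+
    have x: "u * a \<in> {0<..}" and y: "v * b \<in> {0<..}" using u v a0 b0 by auto
    have "((1 - 1/v) *\<^sub>R (u * a) + (1/v) *\<^sub>R (v * b)) powr p \<le> (1 - 1/v) * (u * a) powr p + (1/v) * (v * b) powr p"
      by (rule convex_onD[OF C t0 x y])
    moreover have "1 - 1/v = 1/u" using uv by simp
    moreover have "(1/u) * (u * a) + (1/v) * (v * b) = a + b" using u v by simp
    ultimately have *: "(a + b) powr p \<le> (1/u) * (u * a) powr p + (1/v) * (v * b) powr p"
      by simp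
    have pw: "x powr (p - 1) = x powr p / x" if "x > 0" for x :: real
      using that by (simp add: powr_diff)
    have e1: "(1/u) * (u * a) powr p = u powr (p - 1) * a powr p"
      using u a0 by (simp add: powr_mult pw[OF u])
    have e2: "(1/v) * (v * b) powr p = v powr (p - 1) * b powr p"
      using v b0 by (simp add: powr_mult pw[OF v])
    show ?thesis using * e1 e2 by simp
  qed
qed



lemma diff_shift_meas:
  fixes f :: "'g::{topological_group_add, second_countable_topology} \<Rightarrow> real"
  assumes f: "f \<in> borel_measurable borel"
  shows "(\<lambda>h. ennreal (\<bar>f (a + h) - f (b + h)\<bar> powr p)) \<in> borel_measurable borel"
proof -
  have fa: "(\<lambda>h. f (a + h)) \<in> borel_measurable borel"
    by (rule cont_comp_meas[OF _ f]) (intro continuous_on_add continuous_on_const continuous_on_id)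
  have fb: "(\<lambda>h. f (b + h)) \<in> borel_measurable borel"
    by (rule cont_comp_meas[OF _ f]) (intro continuous_on_add continuous_on_const continuous_on_id)
  have "(\<lambda>h. f (a + h) - f (b + h)) \<in> borel_measurable borel"
    using fa fb by (rule borel_measurable_diff)
  then have "(\<lambda>h. \<bar>f (a + h) - f (b + h)\<bar> powr p) \<in> borel_measurable borel"
    by (rule measurable_abs_powr)
  then show ?thesis by (rule measurable_compose[OF _ measurable_ennreal])
qed



lemma word_bound:
  fixes M :: "'g::{topological_group_add, t2_space, second_countable_topology} measure"
  assumes H: "haar_measure M" and f: "f \<in> borel_measurable borel" and p: "p \<ge> 1"
    and B: "\<And>t. t \<in> T \<Longrightarrow> (\<integral>\<^sup>+h. ennreal (\<bar>f h - f (t + h)\<bar> powr p) \<partial>M) \<le> B"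
  shows "set ws \<subseteq> T \<Longrightarrow> (\<integral>\<^sup>+h. ennreal (\<bar>f h - f (sum_list ws + h)\<bar> powr p) \<partial>M) \<le> ennreal (real (length ws) powr p) * B"
proof (induction ws)
  case Nil
  then show ?case by simp
next
  case (Cons t ws)
  define a where "a = sum_list ws"
  define n where "n = real (length ws)"
  have tT: "t \<in> T" and wsT: "set ws \<subseteq> T" using Cons.prems by auto
  have IH: "(\<integral>\<^sup>+h. ennreal (\<bar>f h - f (a + h)\<bar> powr p) \<partial>M) \<le> ennreal (n powr p) * B"
    using Cons.IH[OF wsT] unfolding a_def n_def .
  show ?case
  proof (cases "ws = []")
    case True
    then show ?thesis using B[OF tT] by simp
  next
    case False
    then have n0: "n > 0" unfolding n_def by simp
    define u where "u = (n + 1) / n"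
    define v where "v = n + 1"
    have u0: "u > 0" and v0: "v > 0" using n0 unfolding u_def v_def by auto
    have uv: "1/u + 1/v = 1" using n0 unfolding u_def v_def by (simp add: field_simps)
    have pt: "ennreal (\<bar>f h - f (t + a + h)\<bar> powr p)
        \<le> ennreal (u powr (p - 1)) * ennreal (\<bar>f h - f (a + h)\<bar> powr p)
          + ennreal (v powr (p - 1)) * ennreal (\<bar>f (a + h) - f (t + (a + h))\<bar> powr p)" for h
    proof -
      have "\<bar>f h - f (t + a + h)\<bar> \<le> \<bar>f h - f (a + h)\<bar> + \<bar>f (a + h) - f (t + (a + h))\<bar>"
        by (simp add: add.assoc)
      then have "\<bar>f h - f (t + a + h)\<bar> powr p \<le> (\<bar>f h - f (a + h)\<bar> + \<bar>f (a + h) - f (t + (a + h))\<bar>) powr p"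
        using p by (intro powr_mono2) auto
      also have "\<dots> \<le> u powr (p - 1) * \<bar>f h - f (a + h)\<bar> powr p + v powr (p - 1) * \<bar>f (a + h) - f (t + (a + h))\<bar> powr p"
        by (rule powr_two_convex[OF _ _ u0 v0 uv p]) auto
      finally show ?thesis
        by (simp add: ennreal_mult[symmetric] ennreal_plus[symmetric] del: ennreal_plus)
    qed
    have m1: "(\<lambda>h. ennreal (\<bar>f h - f (a + h)\<bar> powr p)) \<in> borel_measurable M"
      using bm_haar[OF H diff_shift_meas[OF f, of 0 a p]] by simp
    have m2: "(\<lambda>h. ennreal (\<bar>f (a + h) - f (t + (a + h))\<bar> powr p)) \<in> borel_measurable M"
      using bm_haar[OF H diff_shift_meas[OF f, of a "t + a" p]] by (simp add: add.assoc)
    have shift: "(\<integral>\<^sup>+h. ennreal (\<bar>f (a + h) - f (t + (a + h))\<bar> powr p) \<partial>M)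
        = (\<integral>\<^sup>+h. ennreal (\<bar>f h - f (t + h)\<bar> powr p) \<partial>M)"
      using haar_left_int[OF H diff_shift_meas[OF f, of 0 t p], of a] by simp
    have "(\<integral>\<^sup>+h. ennreal (\<bar>f h - f (sum_list (t # ws) + h)\<bar> powr p) \<partial>M)
        = (\<integral>\<^sup>+h. ennreal (\<bar>f h - f (t + a + h)\<bar> powr p) \<partial>M)"
      by (simp add: a_def add.assoc)
    also have "\<dots> \<le> (\<integral>\<^sup>+h. ennreal (u powr (p - 1)) * ennreal (\<bar>f h - f (a + h)\<bar> powr p)
          + ennreal (v powr (p - 1)) * ennreal (\<bar>f (a + h) - f (t + (a + h))\<bar> powr p) \<partial>M)"
      by (intro nn_integral_mono pt)
    also have "\<dots> = ennreal (u powr (p - 1)) * (\<integral>\<^sup>+h. ennreal (\<bar>f h - f (a + h)\<bar> powr p) \<partial>M)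
          + ennreal (v powr (p - 1)) * (\<integral>\<^sup>+h. ennreal (\<bar>f (a + h) - f (t + (a + h))\<bar> powr p) \<partial>M)"
      using m1 m2 by (simp add: nn_integral_add nn_integral_cmult)
    also have "\<dots> \<le> ennreal (u powr (p - 1)) * (ennreal (n powr p) * B) + ennreal (v powr (p - 1)) * B"
      unfolding shift by (intro add_mono mult_left_mono IH B[OF tT]) auto
    also have "\<dots> = ennreal (u powr (p - 1) * n powr p + v powr (p - 1)) * B"
    proof -
      have "ennreal (u powr (p - 1) * n powr p + v powr (p - 1))
          = ennreal (u powr (p - 1)) * ennreal (n powr p) + ennreal (v powr (p - 1))"
        by (simp add: ennreal_plus ennreal_mult)
      then show ?thesis by (simp add: distrib_right mult.assoc)
    qed
    also have "u powr (p - 1) * n powr p + v powr (p - 1) = (n + 1) powr p"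
    proof -
      have A: "n powr p = n powr (p - 1) * n"
      proof -
        have "n powr p = n powr ((p - 1) + 1)" by simp
        also have "\<dots> = n powr (p - 1) * n powr 1" by (rule powr_add)
        also have "\<dots> = n powr (p - 1) * n" using n0 by simp
        finally show ?thesis .
      qed
      have B: "u powr (p - 1) = (n + 1) powr (p - 1) / n powr (p - 1)"
        unfolding u_def using n0 by (simp add: powr_divide)
      have np: "n powr (p - 1) > 0" using n0 by simp
      have "u powr (p - 1) * n powr p = (n + 1) powr (p - 1) * n"
        unfolding A B using np by simp
      then have "u powr (p - 1) * n powr p + v powr (p - 1) = (n + 1) powr (p - 1) * (n + 1)"
        unfolding v_def by (simp add: algebra_simps)
      also have "\<dots> = (n + 1) powr p" using n0 by (simp add: powr_diff)
      finally show ?thesis .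
    qed
    also have "n + 1 = real (length (t # ws))" unfolding n_def by simp
    finally show ?thesis .
  qed
qed



lemma abs_diff_powr_le:
  fixes x y p :: real
  assumes p: "p \<ge> 0"
  shows "\<bar>x - y\<bar> powr p \<le> 2 powr p * (\<bar>x\<bar> powr p + \<bar>y\<bar> powr p)"
proof -
  have "\<bar>x - y\<bar> \<le> 2 * max \<bar>x\<bar> \<bar>y\<bar>" by linarith
  then have "\<bar>x - y\<bar> powr p \<le> (2 * max \<bar>x\<bar> \<bar>y\<bar>) powr p" using p by (intro powr_mono2) auto
  also have "\<dots> = 2 powr p * max \<bar>x\<bar> \<bar>y\<bar> powr p" by (simp add: powr_mult)
  also have "max \<bar>x\<bar> \<bar>y\<bar> powr p \<le> \<bar>x\<bar> powr p + \<bar>y\<bar> powr p"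
    by (cases "\<bar>x\<bar> \<le> \<bar>y\<bar>") (auto simp: max_def)
  then have "2 powr p * max \<bar>x\<bar> \<bar>y\<bar> powr p \<le> 2 powr p * (\<bar>x\<bar> powr p + \<bar>y\<bar> powr p)"
    by (intro mult_left_mono) auto
  finally show ?thesis .
qed

lemma grad_sup_bound:
  fixes lH :: "'h::{topological_group_add, t2_space, second_countable_topology} measure"
  assumes H: "haar_measure lH" and f: "f \<in> borel_measurable borel" and p: "p \<ge> 1"
    and fin: "lp_pow lH p f < \<infinity>" and s: "s \<in> SH"
  shows "lp_pow lH p (\<lambda>h. f h - ltrans s f h) \<le> ennreal (grad_sup lH SH p f powr p)"
proof -
  define X where "X s = lp_pow lH p (\<lambda>h. f h - ltrans s f h)" for s
  have Xe: "X s = (\<integral>\<^sup>+h. ennreal (\<bar>f (0 + h) - f (- s + h)\<bar> powr p) \<partial>lH)" for s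
    unfolding X_def lp_pow_def ltrans_def by simp
  define K0 where "K0 = ennreal (2 powr p) * (2 * lp_pow lH p f)"
  have K0fin: "K0 < \<infinity>" using fin unfolding K0_def by (simp add: ennreal_mult_less_top)
  have fm: "(\<lambda>h. ennreal (\<bar>f h\<bar> powr p)) \<in> borel_measurable lH"
    using bm_haar[OF H diff_shift_meas[OF f, of 0 0 p]] f
    by (intro bm_haar[OF H] measurable_compose[OF _ measurable_ennreal] measurable_abs_powr f)
  have XK: "X s \<le> K0" for s
  proof -
    have fsm: "(\<lambda>h. ennreal (\<bar>f (- s + h)\<bar> powr p)) \<in> borel_measurable lH"
    proof -
      have "(\<lambda>h. f (- s + h)) \<in> borel_measurable borel"
        by (rule cont_comp_meas[OF _ f]) (intro continuous_on_add continuous_on_const continuous_on_id)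
      then show ?thesis
        by (intro bm_haar[OF H] measurable_compose[OF _ measurable_ennreal] measurable_abs_powr)
    qed
    have "X s \<le> (\<integral>\<^sup>+h. ennreal (2 powr p) * (ennreal (\<bar>f h\<bar> powr p) + ennreal (\<bar>f (- s + h)\<bar> powr p)) \<partial>lH)"
      unfolding Xe
    proof (rule nn_integral_mono)
      fix h
      have "\<bar>f h - f (- s + h)\<bar> powr p \<le> 2 powr p * (\<bar>f h\<bar> powr p + \<bar>f (- s + h)\<bar> powr p)"
        using p by (intro abs_diff_powr_le) auto
      then show "ennreal (\<bar>f (0 + h) - f (- s + h)\<bar> powr p)
          \<le> ennreal (2 powr p) * (ennreal (\<bar>f h\<bar> powr p) + ennreal (\<bar>f (- s + h)\<bar> powr p))"
        by (simp add: ennreal_mult[symmetric] ennreal_plus[symmetric] del: ennreal_plus)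
    qed
    also have "\<dots> = ennreal (2 powr p) * ((\<integral>\<^sup>+h. ennreal (\<bar>f h\<bar> powr p) \<partial>lH) + (\<integral>\<^sup>+h. ennreal (\<bar>f (- s + h)\<bar> powr p) \<partial>lH))"
      using fm fsm by (simp add: nn_integral_add nn_integral_cmult)
    also have "(\<integral>\<^sup>+h. ennreal (\<bar>f (- s + h)\<bar> powr p) \<partial>lH) = (\<integral>\<^sup>+h. ennreal (\<bar>f h\<bar> powr p) \<partial>lH)"
      by (rule haar_left_int[OF H]) (intro measurable_compose[OF _ measurable_ennreal] measurable_abs_powr f)
    finally show ?thesis unfolding K0_def lp_pow_def by (simp add: mult_2)
  qed
  have bdd: "bdd_above ((\<lambda>s. lp_norm lH p (\<lambda>h. f h - ltrans s f h)) ` SH)"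
  proof (rule bdd_aboveI2)
    fix s
    have "enn2real (X s) \<le> enn2real K0" using XK[of s] K0fin by (intro enn2real_mono) auto
    then have "enn2real (X s) powr (1 / p) \<le> enn2real K0 powr (1 / p)"
      using p by (intro powr_mono2) auto
    then show "lp_norm lH p (\<lambda>h. f h - ltrans s f h) \<le> enn2real K0 powr (1 / p)"
      unfolding lp_norm_def X_def .
  qed
  have le: "lp_norm lH p (\<lambda>h. f h - ltrans s f h) \<le> grad_sup lH SH p f"
    unfolding grad_sup_def by (rule cSUP_upper[OF s bdd])
  have Xfin: "X s < \<infinity>" using XK[of s] K0fin by (rule le_less_trans)
  have "X s = ennreal (enn2real (X s))" using Xfin by simp
  also have "enn2real (X s) = lp_norm lH p (\<lambda>h. f h - ltrans s f h) powr p"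
    unfolding lp_norm_def X_def using p by (simp add: powr_powr)
  also have "ennreal (lp_norm lH p (\<lambda>h. f h - ltrans s f h) powr p) \<le> ennreal (grad_sup lH SH p f powr p)"
    using le p by (intro ennreal_leI powr_mono2) (auto simp: lp_norm_def)
  finally show ?thesis unfolding X_def .
qed



lemma H_word_bound:
  fixes lH :: "'h::{topological_group_add, t2_space, second_countable_topology} measure"
  assumes U: "unimodular_haar lH" and SF: "sigma_finite_measure lH"
    and f: "f \<in> borel_measurable borel" and p: "p \<ge> 1"
    and fin: "lp_pow lH p f < \<infinity>" and gen: "generates SH"
  shows "(\<integral>\<^sup>+h. ennreal (\<bar>f (- h) - f (a + - h)\<bar> powr p) \<partial>lH)
          \<le> ennreal (real (word_length SH a) powr p) * ennreal (grad_sup lH SH p f powr p)"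
proof -
  have H: "haar_measure lH" using U by (rule unimod_haar)
  define Mg where "Mg = ennreal (grad_sup lH SH p f powr p)"
  have Bt: "(\<integral>\<^sup>+h. ennreal (\<bar>f h - f (t + h)\<bar> powr p) \<partial>lH) \<le> Mg" if t: "t \<in> SH \<union> uminus ` SH" for t
  proof -
    have neg: "(\<integral>\<^sup>+h. ennreal (\<bar>f h - f (- s + h)\<bar> powr p) \<partial>lH) \<le> Mg" if s: "s \<in> SH" for s
    proof -
      have "(\<integral>\<^sup>+h. ennreal (\<bar>f h - f (- s + h)\<bar> powr p) \<partial>lH) = lp_pow lH p (\<lambda>h. f h - ltrans s f h)"
        by (simp add: lp_pow_def ltrans_def)
      also have "\<dots> \<le> Mg" unfolding Mg_def by (rule grad_sup_bound[OF H f p fin s])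
      finally show ?thesis .
    qed
    from t show ?thesis
    proof
      assume s: "t \<in> SH"
      have e: "(\<integral>\<^sup>+h. ennreal (\<bar>f (- t + h) - f h\<bar> powr p) \<partial>lH)
          = (\<integral>\<^sup>+h. ennreal (\<bar>f h - f (t + h)\<bar> powr p) \<partial>lH)"
        using haar_left_int[OF H diff_shift_meas[OF f, of 0 t p], of "- t"] by (simp add: add.assoc[symmetric])
      have "(\<integral>\<^sup>+h. ennreal (\<bar>f h - f (t + h)\<bar> powr p) \<partial>lH)
          = (\<integral>\<^sup>+h. ennreal (\<bar>f h - f (- t + h)\<bar> powr p) \<partial>lH)"
        unfolding e[symmetric] by (simp add: abs_minus_commute)
      also have "\<dots> \<le> Mg" by (rule neg[OF s])
      finally show ?thesis .
    next
      assume "t \<in> uminus ` SH"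
      then obtain s where s: "s \<in> SH" "t = - s" by blast
      then show ?thesis using neg[OF s(1)] by simp
    qed
  qed
  obtain n where "a \<in> words SH n" using gen unfolding generates_def by blast
  then have "a \<in> words SH (word_length SH a)" unfolding word_length_def by (rule LeastI)
  then obtain ws where ws: "a = sum_list ws" "length ws = word_length SH a" "set ws \<subseteq> SH \<union> uminus ` SH"
    unfolding words_def by blast
  have "(\<integral>\<^sup>+h. ennreal (\<bar>f (- h) - f (a + - h)\<bar> powr p) \<partial>lH)
      = (\<integral>\<^sup>+h. ennreal (\<bar>f (0 + h) - f (a + h)\<bar> powr p) \<partial>lH)"
    using haar_inv_int[OF U SF diff_shift_meas[OF f, of 0 a p]] by simp
  also have "\<dots> = (\<integral>\<^sup>+h. ennreal (\<bar>f h - f (sum_list ws + h)\<bar> powr p) \<partial>lH)"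
    using ws(1) by simp
  also have "\<dots> \<le> ennreal (real (length ws) powr p) * Mg"
    by (rule word_bound[OF H f p Bt ws(3)])
  finally show ?thesis using ws(2) unfolding Mg_def by simp
qed



lemma iso_space:
  assumes "space L = UNIV"
  shows "space (L \<Otimes>\<^sub>M N) = UNIV \<times> space N"
  using assms by (simp add: space_pair_measure)

lemma iso_inj:
  assumes iso: "measure_iso (L \<Otimes>\<^sub>M N) \<mu> (\<lambda>(h, x). act h x)" and sp: "space L = UNIV"
    and y: "y \<in> space N" and x: "x \<in> space N" and eq: "act h y = act h' x"
  shows "h = h' \<and> y = x"
proof -
  have inj: "inj_on (\<lambda>(h, x). act h x) (UNIV \<times> space N)"
    using iso iso_space[OF sp, of N] unfolding measure_iso_def by (simp add: bij_betw_def)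
  have "(h, y) = (h', x)" by (rule inj_onD[OF inj]) (use y x eq in auto)
  then show ?thesis by simp
qed

lemma iso_surj:
  assumes iso: "measure_iso (L \<Otimes>\<^sub>M N) \<mu> (\<lambda>(h, x). act h x)" and sp: "space L = UNIV"
    and z: "z \<in> space \<mu>"
  obtains h y where "y \<in> space N" "z = act h y"
proof -
  have "(\<lambda>(h, x). act h x) ` (UNIV \<times> space N) = space \<mu>"
    using iso iso_space[OF sp, of N] unfolding measure_iso_def by (simp add: bij_betw_def)
  then have "z \<in> (\<lambda>(h, x). act h x) ` (UNIV \<times> space N)" using z by simp
  then obtain h y where "y \<in> space N" "z = act h y" by auto
  then show ?thesis by (rule that)
qed

lemma ftilde_H:
  assumes iso: "measure_iso (L \<Otimes>\<^sub>M N) \<mu> (\<lambda>(h, x). hact h x)" and sp: "space L = UNIV"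
    and y: "y \<in> space N"
  shows "ftilde hact (space N) f (hact h y) = f (- h)"
proof -
  have "(THE h'. \<exists>x\<in>space N. hact h y = hact h' x) = h"
  proof (rule the_equality)
    show "\<exists>x\<in>space N. hact h y = hact h x" using y by blast
    fix h' assume "\<exists>x\<in>space N. hact h y = hact h' x"
    then obtain x where "x \<in> space N" "hact h y = hact h' x" by blast
    then show "h' = h" using iso_inj[OF iso sp y] by metis
  qed
  then show ?thesis unfolding ftilde_def by simp
qed

lemma ftilde_meas:
  fixes f :: "'h::{topological_group_add, second_countable_topology} \<Rightarrow> real"
  assumes iso: "measure_iso (L \<Otimes>\<^sub>M N) \<mu> (\<lambda>(h, x). hact h x)" and sp: "space L = UNIV"
    and S: "sets L = sets borel" and f: "f \<in> borel_measurable borel"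
  shows "ftilde hact (space N) f \<in> borel_measurable \<mu>"
proof -
  define \<psi> where "\<psi> = the_inv_into (space (L \<Otimes>\<^sub>M N)) (\<lambda>(h, x). hact h x)"
  have bij: "bij_betw (\<lambda>(h, x). hact h x) (space (L \<Otimes>\<^sub>M N)) (space \<mu>)"
    and \<psi>m: "\<psi> \<in> \<mu> \<rightarrow>\<^sub>M L \<Otimes>\<^sub>M N"
    using iso unfolding measure_iso_def \<psi>_def by auto
  have eq: "ftilde hact (space N) f z = f (- fst (\<psi> z))" if z: "z \<in> space \<mu>" for z
  proof -
    have "\<psi> z \<in> space (L \<Otimes>\<^sub>M N)" using \<psi>m z by (rule measurable_space)
    then have in2: "snd (\<psi> z) \<in> space N" using sp by (simp add: space_pair_measure mem_Times_iff)
    have "(\<lambda>(h, x). hact h x) (\<psi> z) = z"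
      unfolding \<psi>_def using bij z by (intro f_the_inv_into_f_bij_betw) auto
    then have zeq: "z = hact (fst (\<psi> z)) (snd (\<psi> z))" by (simp add: case_prod_beta)
    have "ftilde hact (space N) f z = ftilde hact (space N) f (hact (fst (\<psi> z)) (snd (\<psi> z)))"
      by (rule arg_cong[OF zeq])
    also have "\<dots> = f (- fst (\<psi> z))" by (rule ftilde_H[OF iso sp in2])
    finally show ?thesis .
  qed
  have "(\<lambda>z. fst (\<psi> z)) \<in> \<mu> \<rightarrow>\<^sub>M L" using \<psi>m by (rule measurable_compose[OF _ measurable_fst])
  then have "(\<lambda>z. fst (\<psi> z)) \<in> borel_measurable \<mu>" by (simp only: measurable_cong_sets[OF refl S])
  then have "(\<lambda>z. - fst (\<psi> z)) \<in> borel_measurable \<mu>" by (rule meas_uminus)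
  then have "(\<lambda>z. f (- fst (\<psi> z))) \<in> borel_measurable \<mu>" using f by (rule measurable_compose)
  then show ?thesis using eq by (subst measurable_cong) auto
qed



lemma cocycle_lemma:
  fixes lH :: "'h::topological_group_add measure" and lG :: "'g::topological_group_add measure"
  assumes C: "me_coupling lG lH \<mu> gact hact nuG nuH" and sp: "space lH = UNIV" and y: "y \<in> space nuH"
  shows "ftilde hact (space nuH) f (gact k (hact h y)) = f (cocycle gact hact (space nuH) k y + - h)"
proof -
  have mpG: "mp_action \<mu> gact" and mpH: "mp_action \<mu> hact" and subH: "space nuH \<subseteq> space \<mu>"
    and isoH: "measure_iso (lH \<Otimes>\<^sub>M nuH) \<mu> (\<lambda>(h, x). hact h x)"
    and comm: "\<And>g h \<omega>. \<omega> \<in> space \<mu> \<Longrightarrow> gact g (hact h \<omega>) = hact h (gact g \<omega>)"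
    using C by (simp_all add: me_coupling_def)
  have act0: "\<And>\<omega>. \<omega> \<in> space \<mu> \<Longrightarrow> hact 0 \<omega> = \<omega>"
    and actadd: "\<And>g h \<omega>. \<omega> \<in> space \<mu> \<Longrightarrow> hact (g + h) \<omega> = hact g (hact h \<omega>)"
    using mpH by (simp_all add: mp_action_def)
  have gk: "gact k \<in> \<mu> \<rightarrow>\<^sub>M \<mu>" using mpG by (simp add: mp_action_def)
  have y\<mu>: "y \<in> space \<mu>" using y subH by auto
  have z: "gact k y \<in> space \<mu>" using gk y\<mu> by (rule measurable_space)
  obtain h0 y0 where y0: "y0 \<in> space nuH" and zeq: "gact k y = hact h0 y0"
    using iso_surj[OF isoH sp z] by blast
  have y0\<mu>: "y0 \<in> space \<mu>" using y0 subH by auto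
  have coc: "cocycle gact hact (space nuH) k y = - h0"
    unfolding cocycle_def
  proof (rule the_equality)
    have "hact (- h0) (gact k y) = hact 0 y0" unfolding zeq using actadd[OF y0\<mu>, of "- h0" h0] by simp
    also have "\<dots> = y0" using act0[OF y0\<mu>] by simp
    finally show "hact (- h0) (gact k y) \<in> space nuH" using y0 by simp
  next
    fix a assume a: "hact a (gact k y) \<in> space nuH"
    define y1 where "y1 = hact a (gact k y)"
    have y1\<mu>: "y1 \<in> space \<mu>" using a subH unfolding y1_def by auto
    have "hact (a + h0) y0 = y1" unfolding y1_def zeq by (rule actadd[OF y0\<mu>])
    also have "\<dots> = hact 0 y1" using act0[OF y1\<mu>] by simp
    finally have "a + h0 = 0" using iso_inj[OF isoH sp y0 a[folded y1_def]] by blast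
    then show "a = - h0" by (simp add: eq_neg_iff_add_eq_0)
  qed
  have "gact k (hact h y) = hact h (gact k y)" by (rule comm[OF y\<mu>])
  also have "\<dots> = hact (h + h0) y0" unfolding zeq by (rule actadd[OF y0\<mu>, symmetric])
  finally have "ftilde hact (space nuH) f (gact k (hact h y)) = f (- (h + h0))"
    using ftilde_H[OF isoH sp y0] by simp
  also have "\<dots> = f (- h0 + - h)" by (simp add: minus_add)
  finally show ?thesis using coc by simp
qed



lemma per_s_bound:
  fixes lG :: "'g::{topological_group_add, t2_space, second_countable_topology} measure"
    and lH :: "'h::{topological_group_add, t2_space, second_countable_topology} measure"
    and f :: "'h \<Rightarrow> real"
  assumes C: "me_coupling lG lH \<mu> gact hact nuG nuH"
    and HG: "haar_measure lG" and UH: "unimodular_haar lH"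
    and SFG: "sigma_finite_measure lG" and SFH: "sigma_finite_measure lH"
    and f: "f \<in> borel_measurable borel" and p: "p \<ge> 1"
    and fin: "lp_pow lH p f < \<infinity>" and gen: "generates SH"
  shows "(\<integral>\<^sup>+x. (\<integral>\<^sup>+g. ennreal (\<bar>ftilde hact (space nuH) f (gact g x)
            - ftilde hact (space nuH) f (gact k (gact g x))\<bar> powr p) \<partial>lG) \<partial>nuG)
         \<le> (\<integral>\<^sup>+y. ennreal (real (word_length SH (cocycle gact hact (space nuH) k y)) powr p) \<partial>nuH)
            * ennreal (grad_sup lH SH p f powr p)"
proof -
  define F where "F = ftilde hact (space nuH) f"
  define Mg where "Mg = ennreal (grad_sup lH SH p f powr p)"
  have HH: "haar_measure lH" using UH by (rule unimod_haar)
  have mpG: "mp_action \<mu> gact"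
    and finG: "finite_measure nuG" and finH: "finite_measure nuH"
    and isoG: "measure_iso (lG \<Otimes>\<^sub>M nuG) \<mu> (\<lambda>(g, x). gact g x)"
    and isoH: "measure_iso (lH \<Otimes>\<^sub>M nuH) \<mu> (\<lambda>(h, x). hact h x)"
    using C by (simp_all add: me_coupling_def)
  have gk: "gact k \<in> \<mu> \<rightarrow>\<^sub>M \<mu>" using mpG by (simp add: mp_action_def)
  have \<Phi>Gm: "(\<lambda>(g, x). gact g x) \<in> lG \<Otimes>\<^sub>M nuG \<rightarrow>\<^sub>M \<mu>" and DG: "distr (lG \<Otimes>\<^sub>M nuG) \<mu> (\<lambda>(g, x). gact g x) = \<mu>"
    using isoG unfolding measure_iso_def by auto
  have \<Phi>Hm: "(\<lambda>(h, x). hact h x) \<in> lH \<Otimes>\<^sub>M nuH \<rightarrow>\<^sub>M \<mu>" and DH: "distr (lH \<Otimes>\<^sub>M nuH) \<mu> (\<lambda>(h, x). hact h x) = \<mu>"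
    using isoH unfolding measure_iso_def by auto
  have Fm: "F \<in> borel_measurable \<mu>"
    unfolding F_def by (rule ftilde_meas[OF isoH haar_space[OF HH] haar_sets[OF HH] f])
  have Fkm: "(\<lambda>\<omega>. F (gact k \<omega>)) \<in> borel_measurable \<mu>" using gk Fm by (rule measurable_compose)
  define E where "E \<omega> = ennreal (\<bar>F \<omega> - F (gact k \<omega>)\<bar> powr p)" for \<omega>
  have Em: "E \<in> borel_measurable \<mu>"
  proof -
    have "(\<lambda>\<omega>. F \<omega> - F (gact k \<omega>)) \<in> borel_measurable \<mu>" using Fm Fkm by (rule borel_measurable_diff)
    then have "(\<lambda>\<omega>. \<bar>F \<omega> - F (gact k \<omega>)\<bar> powr p) \<in> borel_measurable \<mu>" by (rule measurable_abs_powr)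
    then show ?thesis unfolding E_def by (rule measurable_compose[OF _ measurable_ennreal])
  qed
  have sfG: "sigma_finite_measure nuG" using finG by (rule finite_measure.axioms(1))
  have sfH: "sigma_finite_measure nuH" using finH by (rule finite_measure.axioms(1))
  interpret PG: pair_sigma_finite lG nuG using SFG sfG by (simp add: pair_sigma_finite_def)
  interpret PH: pair_sigma_finite lH nuH using SFH sfH by (simp add: pair_sigma_finite_def)
  have EGm: "(\<lambda>q. E ((\<lambda>(g, x). gact g x) q)) \<in> borel_measurable (lG \<Otimes>\<^sub>M nuG)"
    using \<Phi>Gm Em by (rule measurable_compose)
  have EHm: "(\<lambda>q. E ((\<lambda>(h, x). hact h x) q)) \<in> borel_measurable (lH \<Otimes>\<^sub>M nuH)"
    using \<Phi>Hm Em by (rule measurable_compose)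
  have EmG: "E \<in> borel_measurable (distr (lG \<Otimes>\<^sub>M nuG) \<mu> (\<lambda>(g, x). gact g x))" using Em DG by simp
  have EmH: "E \<in> borel_measurable (distr (lH \<Otimes>\<^sub>M nuH) \<mu> (\<lambda>(h, x). hact h x))" using Em DH by simp
  have "(\<integral>\<^sup>+x. (\<integral>\<^sup>+g. ennreal (\<bar>F (gact g x) - F (gact k (gact g x))\<bar> powr p) \<partial>lG) \<partial>nuG)
      = (\<integral>\<^sup>+x. (\<integral>\<^sup>+g. E ((\<lambda>(g, x). gact g x) (g, x)) \<partial>lG) \<partial>nuG)"
    unfolding E_def by simp
  also have "\<dots> = integral\<^sup>N (lG \<Otimes>\<^sub>M nuG) (\<lambda>q. E ((\<lambda>(g, x). gact g x) q))"
    by (rule PG.nn_integral_snd[OF EGm])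
  also have "\<dots> = integral\<^sup>N (distr (lG \<Otimes>\<^sub>M nuG) \<mu> (\<lambda>(g, x). gact g x)) E"
    by (rule nn_integral_distr[OF \<Phi>Gm EmG, symmetric])
  also have "\<dots> = integral\<^sup>N \<mu> E" using DG by simp
  also have "\<dots> = integral\<^sup>N (distr (lH \<Otimes>\<^sub>M nuH) \<mu> (\<lambda>(h, x). hact h x)) E" using DH by simp
  also have "\<dots> = integral\<^sup>N (lH \<Otimes>\<^sub>M nuH) (\<lambda>q. E ((\<lambda>(h, x). hact h x) q))"
    by (rule nn_integral_distr[OF \<Phi>Hm EmH])
  also have "\<dots> = (\<integral>\<^sup>+y. (\<integral>\<^sup>+h. E ((\<lambda>(h, x). hact h x) (h, y)) \<partial>lH) \<partial>nuH)"
    by (rule PH.nn_integral_snd[OF EHm, symmetric])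
  also have "\<dots> \<le> (\<integral>\<^sup>+y. ennreal (real (word_length SH (cocycle gact hact (space nuH) k y)) powr p) * Mg \<partial>nuH)"
  proof (rule nn_integral_mono)
    fix y assume y: "y \<in> space nuH"
    have "(\<integral>\<^sup>+h. E ((\<lambda>(h, x). hact h x) (h, y)) \<partial>lH)
        = (\<integral>\<^sup>+h. ennreal (\<bar>f (- h) - f (cocycle gact hact (space nuH) k y + - h)\<bar> powr p) \<partial>lH)"
      unfolding E_def F_def
      using ftilde_H[OF isoH haar_space[OF HH] y] cocycle_lemma[OF C haar_space[OF HH] y] by simp
    also have "\<dots> \<le> ennreal (real (word_length SH (cocycle gact hact (space nuH) k y)) powr p) * Mg"
      unfolding Mg_def by (rule H_word_bound[OF UH SFH f p fin gen])
    finally show "(\<integral>\<^sup>+h. E ((\<lambda>(h, x). hact h x) (h, y)) \<partial>lH)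
        \<le> ennreal (real (word_length SH (cocycle gact hact (space nuH) k y)) powr p) * Mg" .
  qed
  also have "\<dots> = (\<integral>\<^sup>+y. ennreal (real (word_length SH (cocycle gact hact (space nuH) k y)) powr p) \<partial>nuH) * Mg"
    unfolding Mg_def by (rule nn_integral_multc_any) simp
  finally show ?thesis unfolding F_def Mg_def .
qed



theorem mainTheorem13:
  fixes lG :: "'g::{topological_group_add, t2_space, second_countable_topology} measure"
    and lH :: "'h::{topological_group_add, t2_space, second_countable_topology} measure"
    and \<mu> :: "'w measure"
    and gact :: "'g \<Rightarrow> 'w \<Rightarrow> 'w" and hact :: "'h \<Rightarrow> 'w \<Rightarrow> 'w"
    and nuG nuH :: "'w measure"
    and SG :: "'g set" and SH :: "'h set"
    and p :: real and f :: "'h \<Rightarrow> real"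
  assumes "lcsc_group TYPE('g)" and "lcsc_group TYPE('h)"
    and "non_discrete_group TYPE('g)" and "non_discrete_group TYPE('h)"
    and "unimodular_haar lG" and "unimodular_haar lH"
    and "compact_generating_set SG" and "compact_generating_set SH"
    and "me_coupling lG lH \<mu> gact hact nuG nuH"
    and "p \<ge> 1"
    and Cp: "(\<integral>\<^sup>+ s. indicator SG s *
               (\<integral>\<^sup>+ x. ennreal (real (word_length SH (cocycle gact hact (space nuH) (- s) x)) powr p) \<partial>nuH)
             \<partial>lG) < \<infinity>"
    and "f \<in> borel_measurable borel"
    and "lp_pow lH p f < \<infinity>"
    and "emeasure lH {h. f h \<noteq> 0} < \<infinity>"
  shows "(\<integral>\<^sup>+ x. grad_int_pow lG SG p (fx gact hact (space nuH) f x) \<partial>nuG)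
           \<le> (\<integral>\<^sup>+ s. indicator SG s *
               (\<integral>\<^sup>+ x. ennreal (real (word_length SH (cocycle gact hact (space nuH) (- s) x)) powr p) \<partial>nuH)
             \<partial>lG) * ennreal (grad_sup lH SH p f powr p)"
  proof -
  note C = assms(9)
  define F where "F = ftilde hact (space nuH) f"
  define Mg where "Mg = ennreal (grad_sup lH SH p f powr p)"
  define K where "K s = (\<integral>\<^sup>+ x. ennreal (real (word_length SH (cocycle gact hact (space nuH) (- s) x)) powr p) \<partial>nuH)" for s
  have HG: "haar_measure lG" using assms(5) by (rule unimod_haar)
  have HH: "haar_measure lH" using assms(6) by (rule unimod_haar)
  have SFG: "sigma_finite_measure lG" by (rule haar_sigma_finite[OF assms(1) HG])
  have SFH: "sigma_finite_measure lH" by (rule haar_sigma_finite[OF assms(2) HH])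
  have gen: "generates SH" using assms(8) by (simp add: compact_generating_set_def)
  have SGc: "compact SG" using assms(7) by (simp add: compact_generating_set_def)
  have SGb: "SG \<in> sets lG" using borel_compact[OF SGc] haar_sets[OF HG] by simp
  have mpG: "mp_action \<mu> gact" and finG: "finite_measure nuG" and subG: "space nuG \<subseteq> space \<mu>"
    and isoG: "measure_iso (lG \<Otimes>\<^sub>M nuG) \<mu> (\<lambda>(g, x). gact g x)"
    and isoH: "measure_iso (lH \<Otimes>\<^sub>M nuH) \<mu> (\<lambda>(h, x). hact h x)"
    using C by (simp_all add: me_coupling_def)
  have actadd: "\<And>g h \<omega>. \<omega> \<in> space \<mu> \<Longrightarrow> gact (g + h) \<omega> = gact g (gact h \<omega>)"
    and actm: "(\<lambda>(g, \<omega>). gact g \<omega>) \<in> (borel \<Otimes>\<^sub>M \<mu>) \<rightarrow>\<^sub>M \<mu>"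
    using mpG by (simp_all add: mp_action_def)
  have \<Phi>Gm: "(\<lambda>(g, x). gact g x) \<in> lG \<Otimes>\<^sub>M nuG \<rightarrow>\<^sub>M \<mu>" using isoG unfolding measure_iso_def by auto
  have Fm: "F \<in> borel_measurable \<mu>"
    unfolding F_def by (rule ftilde_meas[OF isoH haar_space[OF HH] haar_sets[OF HH] assms(12)])
  have sfG: "sigma_finite_measure nuG" using finG by (rule finite_measure.axioms(1))
  interpret PGs: pair_sigma_finite nuG lG using SFG sfG by (simp add: pair_sigma_finite_def)
  define J where "J q = ennreal (\<bar>F (gact (snd q) (fst (fst q))) - F (gact (- snd (fst q)) (gact (snd q) (fst (fst q))))\<bar> powr p)" for q
  have Jm: "J \<in> borel_measurable ((nuG \<Otimes>\<^sub>M lG) \<Otimes>\<^sub>M lG)"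
  proof -
    define E2 where "E2 q = ennreal (\<bar>F (snd q) - F ((\<lambda>(g, \<omega>). gact g \<omega>) q)\<bar> powr p)" for q
    have E2m: "E2 \<in> borel_measurable (borel \<Otimes>\<^sub>M \<mu>)"
    proof -
      have a: "(\<lambda>q. F (snd q)) \<in> borel_measurable (borel \<Otimes>\<^sub>M \<mu>)"
        using measurable_snd Fm by (rule measurable_compose)
      have b: "(\<lambda>q. F ((\<lambda>(g, \<omega>). gact g \<omega>) q)) \<in> borel_measurable (borel \<Otimes>\<^sub>M \<mu>)"
        using actm Fm by (rule measurable_compose)
      have "(\<lambda>q. F (snd q) - F ((\<lambda>(g, \<omega>). gact g \<omega>) q)) \<in> borel_measurable (borel \<Otimes>\<^sub>M \<mu>)"
        using a b by (rule borel_measurable_diff)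
      then have "(\<lambda>q. \<bar>F (snd q) - F ((\<lambda>(g, \<omega>). gact g \<omega>) q)\<bar> powr p) \<in> borel_measurable (borel \<Otimes>\<^sub>M \<mu>)"
        by (rule measurable_abs_powr)
      then show ?thesis unfolding E2_def by (rule measurable_compose[OF _ measurable_ennreal])
    qed
    have s1: "(\<lambda>q. snd q) \<in> (nuG \<Otimes>\<^sub>M lG) \<Otimes>\<^sub>M lG \<rightarrow>\<^sub>M lG" by (rule measurable_snd)
    have s1b: "(\<lambda>q. snd (fst q)) \<in> borel_measurable ((nuG \<Otimes>\<^sub>M lG) \<Otimes>\<^sub>M lG)"
    proof -
      have "(\<lambda>q. snd (fst q)) \<in> (nuG \<Otimes>\<^sub>M lG) \<Otimes>\<^sub>M lG \<rightarrow>\<^sub>M lG"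
        by (rule measurable_compose[OF measurable_fst measurable_snd])
      then show ?thesis by (simp only: measurable_cong_sets[OF refl haar_sets[OF HG]])
    qed
    have s2: "(\<lambda>q. - snd (fst q)) \<in> borel_measurable ((nuG \<Otimes>\<^sub>M lG) \<Otimes>\<^sub>M lG)"
      using s1b by (rule meas_uminus)
    have s3: "(\<lambda>q. fst (fst q)) \<in> (nuG \<Otimes>\<^sub>M lG) \<Otimes>\<^sub>M lG \<rightarrow>\<^sub>M nuG"
      by (rule measurable_compose[OF measurable_fst measurable_fst])
    have s4: "(\<lambda>q. (snd q, fst (fst q))) \<in> (nuG \<Otimes>\<^sub>M lG) \<Otimes>\<^sub>M lG \<rightarrow>\<^sub>M lG \<Otimes>\<^sub>M nuG"
      using s1 s3 by (rule measurable_Pair)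
    have s5: "(\<lambda>q. gact (snd q) (fst (fst q))) \<in> (nuG \<Otimes>\<^sub>M lG) \<Otimes>\<^sub>M lG \<rightarrow>\<^sub>M \<mu>"
      using measurable_compose[OF s4 \<Phi>Gm] by simp
    have s6: "(\<lambda>q. (- snd (fst q), gact (snd q) (fst (fst q)))) \<in> (nuG \<Otimes>\<^sub>M lG) \<Otimes>\<^sub>M lG \<rightarrow>\<^sub>M borel \<Otimes>\<^sub>M \<mu>"
      using s2 s5 by (rule measurable_Pair)
    have "(\<lambda>q. E2 (- snd (fst q), gact (snd q) (fst (fst q)))) \<in> borel_measurable ((nuG \<Otimes>\<^sub>M lG) \<Otimes>\<^sub>M lG)"
      using s6 E2m by (rule measurable_compose)
    then show ?thesis unfolding J_def E2_def by simp
  qed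
  have Im: "(\<lambda>q. \<integral>\<^sup>+g. J (q, g) \<partial>lG) \<in> borel_measurable (nuG \<Otimes>\<^sub>M lG)"
    by (rule sigma_finite_measure.borel_measurable_nn_integral_fst[OF SFG Jm])
  have indm: "(\<lambda>q. indicator SG (snd q) :: ennreal) \<in> borel_measurable (nuG \<Otimes>\<^sub>M lG)"
    using measurable_snd borel_measurable_indicator[OF SGb] by (rule measurable_compose)
  have Pm: "(\<lambda>(x, s). indicator SG s * (\<integral>\<^sup>+g. J ((x, s), g) \<partial>lG)) \<in> borel_measurable (nuG \<Otimes>\<^sub>M lG)"
  proof -
    have "(\<lambda>q. indicator SG (snd q) * (\<integral>\<^sup>+g. J (q, g) \<partial>lG)) \<in> borel_measurable (nuG \<Otimes>\<^sub>M lG)"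
      using indm Im by (rule borel_measurable_times_ennreal)
    then show ?thesis by (simp add: case_prod_beta')
  qed
  have inner: "grad_int_pow lG SG p (fx gact hact (space nuH) f x)
      = (\<integral>\<^sup>+s. indicator SG s * (\<integral>\<^sup>+g. J ((x, s), g) \<partial>lG) \<partial>lG)" if x: "x \<in> space nuG" for x
  proof -
    have x\<mu>: "x \<in> space \<mu>" using x subG by auto
    show ?thesis
      unfolding grad_int_pow_def lp_pow_def J_def fx_def ltrans_def F_def
      using actadd[OF x\<mu>] by simp
  qed
  have "(\<integral>\<^sup>+x. grad_int_pow lG SG p (fx gact hact (space nuH) f x) \<partial>nuG)
      = (\<integral>\<^sup>+x. (\<integral>\<^sup>+s. indicator SG s * (\<integral>\<^sup>+g. J ((x, s), g) \<partial>lG) \<partial>lG) \<partial>nuG)"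
    by (rule nn_integral_cong) (rule inner)
  also have "\<dots> = (\<integral>\<^sup>+s. (\<integral>\<^sup>+x. indicator SG s * (\<integral>\<^sup>+g. J ((x, s), g) \<partial>lG) \<partial>nuG) \<partial>lG)"
    by (rule PGs.Fubini'[OF Pm, symmetric])
  also have "\<dots> = (\<integral>\<^sup>+s. indicator SG s * (\<integral>\<^sup>+x. (\<integral>\<^sup>+g. J ((x, s), g) \<partial>lG) \<partial>nuG) \<partial>lG)"
    by (intro nn_integral_cong nn_integral_cmult_any) (simp add: indicator_def)
  also have "\<dots> \<le> (\<integral>\<^sup>+s. indicator SG s * (K s * Mg) \<partial>lG)"
  proof (intro nn_integral_mono mult_left_mono order.refl)
    fix s
    show "(\<integral>\<^sup>+x. (\<integral>\<^sup>+g. J ((x, s), g) \<partial>lG) \<partial>nuG) \<le> K s * Mg"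
      unfolding J_def K_def Mg_def F_def
      using per_s_bound[OF C HG assms(6) SFG SFH assms(12) assms(10) assms(13) gen, of "- s"] by simp
  qed simp
  also have "\<dots> = (\<integral>\<^sup>+s. indicator SG s * K s \<partial>lG) * Mg"
    unfolding Mg_def by (simp only: mult.assoc[symmetric]) (rule nn_integral_multc_any, simp)
  finally show ?thesis unfolding K_def Mg_def .
qed


end
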